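(* Let $q>0$, $\kappa>0$, $\sigma>0$, $\mu\in\mathbb{R}$, $\theta\in\mathbb{R}$, and let $\psi_X$, $\rho$, $\hat\rho$, $\zeta$, $\hat\zeta$, $d$ be as in the context. Consider the equation $$\psi_X(z)=q,\qquad z\in\mathbb{C}. \tag{$*$}$$ Then: (i) $( * )$ has no solutions, exactly one solution, or exactly two solutions. (ii) $z_0\in\mathbb{C}$ is a solution of $( * )$ if and only if $z_0\in[\hat\rho,0)\cup(0,\rho]$, $z_0\in\{\zeta,\hat\zeta\}$, $d>0$, and $q-1/\kappa\le \mu z_0$. In particular, whenever one of $\zeta,\hat\zeta$ is a solution of $( * )$, we have $\zeta\neq\hat\zeta$. (iii) If $\zeta$ is a solution of $( * )$ then $\zeta>0$; if $\hat\zeta$ is a solution of $( * )$ then $\hat\zeta<0$. Consequently, if both are solutions, then $\hat\rho\le\hat\zeta<0<\zeta\le\rho$. (iv) If $z_0$ solves $( * )$ and $\hat\rho<z_0<\rho$, then $z_0$ is a simple zero of the function $q-\psi_X(z)$ (which is analytic near $z_0$). (v) If $\zeta\in\mathbb{R}$ then $\hat\rho\le\zeta\le\rho$; if $\hat\zeta\in\mathbb{R}$ then $\hat\rho\le\hat\zeta\le\rho$. (vi) Neither $\rho=\hat\zeta$ nor $\hat\rho=\zeta$ is possible. (vii) One has both $\rho=\zeta$ and $\hat\rho=\hat\zeta$ if and only if $\mu=0$ and $q=1/\kappa$.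
   Context: Parameters: $q>0,\kappa>0,\sigma>0,\mu\in\mathbb{R},\theta\in\mathbb{R}$. The Laplace exponent of the Normal Inverse Gaussian (NIG) process with parameters $(\theta,\sigma,\kappa,\mu)$ is $$\psi_X(z)=\frac1\kappa-\frac1\kappa\sqrt{1-2\kappa\theta z-\kappa\sigma^2z^2}+\mu z,$$ where $\sqrt{\cdot}$ denotes the principal square root (values with nonnegative real part; for a negative real number $-y$ it equals $\iota\sqrt{y}$), $\iota=\sqrt{-1}$. Put $$\rho:=\frac{-\theta+\sqrt{\theta^2+\sigma^2/\kappa}}{\sigma^2},\qquad \hat\rho:=\frac{-\theta-\sqrt{\theta^2+\sigma^2/\kappa}}{\sigma^2},$$ so that $p(z):=1-2\kappa\theta z-\kappa\sigma^2z^2=(1-z/\rho)(1-z/\hat\rho)$ and $\hat\rho<0<\rho$. Further put $$d:=\theta^2+\mu^2-2\theta\mu(q\kappa-1)+q\sigma^2(2-q\kappa),$$ $$\zeta:=\frac{-\theta-\mu+\kappa\mu q+\sqrt d}{\kappa\mu^2+\sigma^2},\qquad \hat\zeta:=\frac{-\theta-\mu+\kappa\mu q-\sqrt d}{\kappa\mu^2+\sigma^2},$$ which are the two roots of the quadratic equation $p(z)=(1-q\kappa+\kappa\mu z)^2$ (possibly complex). *)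

theory Defs
  imports "HOL-Analysis.Analysis"
begin

text \<open>Laplace exponent of the NIG process, with the principal complex square root csqrt
  (Re >= 0; csqrt of a negative real -y is i * sqrt y).\<close>
definition psiX :: "real \<Rightarrow> real \<Rightarrow> real \<Rightarrow> real \<Rightarrow> complex \<Rightarrow> complex" where
  "psiX \<theta> \<sigma> \<kappa> \<mu> z =
     1 / of_real \<kappa>
     - 1 / of_real \<kappa> * csqrt (1 - 2 * of_real \<kappa> * of_real \<theta> * z - of_real \<kappa> * (of_real \<sigma>)\<^sup>2 * z\<^sup>2)
     + of_real \<mu> * z"

definition rhoNIG :: "real \<Rightarrow> real \<Rightarrow> real \<Rightarrow> real" where
  "rhoNIG \<theta> \<sigma> \<kappa> = (- \<theta> + sqrt (\<theta>\<^sup>2 + \<sigma>\<^sup>2 / \<kappa>)) / \<sigma>\<^sup>2"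

definition rhohatNIG :: "real \<Rightarrow> real \<Rightarrow> real \<Rightarrow> real" where
  "rhohatNIG \<theta> \<sigma> \<kappa> = (- \<theta> - sqrt (\<theta>\<^sup>2 + \<sigma>\<^sup>2 / \<kappa>)) / \<sigma>\<^sup>2"

definition dNIG :: "real \<Rightarrow> real \<Rightarrow> real \<Rightarrow> real \<Rightarrow> real \<Rightarrow> real" where
  "dNIG q \<theta> \<sigma> \<kappa> \<mu> = \<theta>\<^sup>2 + \<mu>\<^sup>2 - 2 * \<theta> * \<mu> * (q * \<kappa> - 1) + q * \<sigma>\<^sup>2 * (2 - q * \<kappa>)"

definition zetaNIG :: "real \<Rightarrow> real \<Rightarrow> real \<Rightarrow> real \<Rightarrow> real \<Rightarrow> complex" where
  "zetaNIG q \<theta> \<sigma> \<kappa> \<mu> =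
     (of_real (- \<theta> - \<mu> + \<kappa> * \<mu> * q) + csqrt (of_real (dNIG q \<theta> \<sigma> \<kappa> \<mu>)))
     / of_real (\<kappa> * \<mu>\<^sup>2 + \<sigma>\<^sup>2)"

definition zetahatNIG :: "real \<Rightarrow> real \<Rightarrow> real \<Rightarrow> real \<Rightarrow> real \<Rightarrow> complex" where
  "zetahatNIG q \<theta> \<sigma> \<kappa> \<mu> =
     (of_real (- \<theta> - \<mu> + \<kappa> * \<mu> * q) - csqrt (of_real (dNIG q \<theta> \<sigma> \<kappa> \<mu>)))
     / of_real (\<kappa> * \<mu>\<^sup>2 + \<sigma>\<^sup>2)"

end

theory Submission
  imports Defs
begin



lemma psi_iff:
  fixes k s m t q :: real assumes "k > 0"
  shows "psiX t s k m z = of_real q \<longleftrightarrow>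
    csqrt (1 - 2 * of_real k * of_real t * z - of_real k * (of_real s)\<^sup>2 * z\<^sup>2)
      = of_real (1 - q*k) + of_real (k*m) * z"
proof -
  have k0: "(of_real k :: complex) \<noteq> 0" using assms by simp
  show ?thesis unfolding psiX_def using k0
    by (auto simp: field_simps)
qed


lemma csqrt_iff: "csqrt S = T \<longleftrightarrow> T\<^sup>2 = S \<and> (0 < Re T \<or> Re T = 0 \<and> 0 \<le> Im T)"
  using csqrt_unique csqrt_principal power2_csqrt by metis

lemma key_id:
  fixes z q k s m t :: "'a::comm_ring_1"
  shows "(s\<^sup>2 + k * m\<^sup>2) * ((1 - q*k + k*m*z)\<^sup>2 - (1 - 2*k*t*z - k * s\<^sup>2 * z\<^sup>2))
     = k * (((s\<^sup>2 + k * m\<^sup>2)*z - (-t - m + k*m*q))\<^sup>2 - (t\<^sup>2 + m\<^sup>2 - 2*t*m*(q*k - 1) + q * s\<^sup>2 * (2 - q*k)))"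
  unfolding power2_eq_square by (simp add: algebra_simps)

lemma real_id:
  fixes x q k s m t u :: real
  assumes "u = 1 - q*k + k*m*x" "u\<^sup>2 = 1 - 2*k*t*x - k * s\<^sup>2 * x\<^sup>2"
  shows "k * x * ((s\<^sup>2 + k * m\<^sup>2)*x - (-t - m + k*m*q)) = (u-1)\<^sup>2/2 + q*k*u + k * s\<^sup>2 * x\<^sup>2/2"
proof -
  have h: "k*t*x = (1 - u\<^sup>2 - k * s\<^sup>2 * x\<^sup>2)/2" using assms(2) by simp
  have e: "k * x * ((s\<^sup>2 + k * m\<^sup>2)*x - (-t - m + k*m*q)) = k * s\<^sup>2 * x\<^sup>2 + k*t*x + (k*m*x)*u"
    unfolding assms(1) by (simp add: algebra_simps power2_eq_square)
  show ?thesis unfolding e h unfolding assms(1)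
    by (simp add: field_simps power2_eq_square)
qed

lemma cplx_case:
  fixes q k s m t :: real and z :: complex
  assumes q: "q > 0" and k: "k > 0" and s: "s > 0"
    and eq: "(of_real (1 - q*k) + of_real (k*m) * z)\<^sup>2 = 1 - 2 * of_real k * of_real t * z - of_real k * (of_real s)\<^sup>2 * z\<^sup>2"
    and y: "Im z \<noteq> 0"
  shows "Re (of_real (1 - q*k) + of_real (k*m) * z) < 0"
proof -
  obtain x y where z: "z = Complex x y" by (cases z)
  define u where "u = 1 - q*k + k*m*x"
  have y0: "y \<noteq> 0" using y z by simp
  have eqc: "Re ((of_real (1 - q*k) + of_real (k*m) * z)\<^sup>2) = Re (1 - 2 * of_real k * of_real t * z - of_real k * (of_real s)\<^sup>2 * z\<^sup>2)"
    "Im ((of_real (1 - q*k) + of_real (k*m) * z)\<^sup>2) = Im (1 - 2 * of_real k * of_real t * z - of_real k * (of_real s)\<^sup>2 * z\<^sup>2)"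
    using eq by auto
  have re: "u\<^sup>2 - (k*m*y)\<^sup>2 = 1 - 2*k*t*x - k * s\<^sup>2 * (x\<^sup>2 - y\<^sup>2)"
    using eqc(1) unfolding z u_def by (simp add: power2_eq_square algebra_simps)
  have im: "2*u*(k*m*y) = -2*k*t*y - 2*k * s\<^sup>2 * x*y"
    using eqc(2) unfolding z u_def by (simp add: power2_eq_square algebra_simps)
  have "y * (2*k*(u*m + t + s\<^sup>2 * x)) = 0" using im by (simp add: algebra_simps)
  hence im3: "u*m = -t - s\<^sup>2 * x" using y0 k by simp
  have pos: "(k*m*y)\<^sup>2 + k * s\<^sup>2 * y\<^sup>2 > 0" using y0 k s
    by (simp add: add_nonneg_pos)
  have A1: "u\<^sup>2 - 1 + 2*(k*t*x) + k * s\<^sup>2 * x\<^sup>2 > 0" using re pos by (simp add: algebra_simps)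
  have A2: "k*t*x = -(k*m*x)*u - k * s\<^sup>2 * x\<^sup>2"
  proof -
    have tt: "t = -u*m - s\<^sup>2 * x" using im3 by simp
    show ?thesis unfolding tt by (simp add: algebra_simps power2_eq_square)
  qed
  have A3: "k*m*x = u - (1 - q*k)" using u_def by simp
  have A2': "k*t*x = -(u - (1 - q*k))*u - k * s\<^sup>2 * x\<^sup>2" using A2 A3 by simp
  have "u\<^sup>2 - 1 - 2*u*(u - (1-q*k)) - k * s\<^sup>2 * x\<^sup>2 > 0"
    using A1 unfolding A2' by (simp add: algebra_simps)
  moreover have "k * s\<^sup>2 * x\<^sup>2 \<ge> 0" using k by simp
  ultimately have A: "u\<^sup>2 - 2*(1-q*k)*u + 1 < 0"
    by (simp add: algebra_simps power2_eq_square)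
  have "u < 0"
  proof (rule ccontr)
    assume "\<not> u < 0"
    hence "q*k*u \<ge> 0" using q k by simp
    moreover have "(u-1)\<^sup>2 \<ge> 0" by simp
    ultimately show False using A by (simp add: algebra_simps power2_eq_square)
  qed
  thus ?thesis by (simp add: z u_def)
qed

lemma rho_facts:
  fixes k s t :: real assumes k: "k > 0" and s: "s > 0"
  shows "rhohatNIG t s k < 0" "0 < rhoNIG t s k"
    "\<And>x. 1 - 2*k*t*x - k * s\<^sup>2 * x\<^sup>2 = - k * s\<^sup>2 * (x - rhoNIG t s k) * (x - rhohatNIG t s k)"
proof -
  define r where "r = sqrt (t\<^sup>2 + s\<^sup>2 / k)"
  have r2: "r\<^sup>2 = t\<^sup>2 + s\<^sup>2 / k" unfolding r_def using k
    by (intro real_sqrt_pow2 add_nonneg_nonneg) auto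
  have r0: "r \<ge> 0" unfolding r_def using k
    by (intro real_sqrt_ge_zero add_nonneg_nonneg) auto
  have "s\<^sup>2 / k > 0" using k s by simp
  hence "r\<^sup>2 > t\<^sup>2" using r2 by simp
  hence rt: "r > \<bar>t\<bar>" using r0 by (metis abs_of_nonneg power2_less_imp_less real_sqrt_abs real_sqrt_pow2_iff abs_ge_zero power2_abs)
  have s2: "s\<^sup>2 > 0" using s by simp
  show "rhohatNIG t s k < 0" unfolding rhohatNIG_def r_def[symmetric]
    using rt s2 by (simp add: divide_neg_pos)
  show "0 < rhoNIG t s k" unfolding rhoNIG_def r_def[symmetric]
    using rt s2 by simp
  fix x
  have "- k * s\<^sup>2 * (x - (- t + r) / s\<^sup>2) * (x - (- t - r) / s\<^sup>2)
        = - k * s\<^sup>2 * x\<^sup>2 - 2*k*t*x - k * (t\<^sup>2 - r\<^sup>2) / s\<^sup>2"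
    using s by (simp add: field_simps power2_eq_square)
  also have "k * (t\<^sup>2 - r\<^sup>2) / s\<^sup>2 = -1" using r2 k s2 by (simp add: field_simps)
  finally show "1 - 2*k*t*x - k * s\<^sup>2 * x\<^sup>2 = - k * s\<^sup>2 * (x - rhoNIG t s k) * (x - rhohatNIG t s k)"
    unfolding rhoNIG_def rhohatNIG_def r_def[symmetric] by simp
qed

theorem proposition2p1:
  fixes q \<kappa> \<sigma> \<mu> \<theta> :: real
  assumes "q > 0" and "\<kappa> > 0" and "\<sigma> > 0"
  defines "\<psi> \<equiv> psiX \<theta> \<sigma> \<kappa> \<mu>"
    and "\<rho> \<equiv> rhoNIG \<theta> \<sigma> \<kappa>"
    and "\<rho>h \<equiv> rhohatNIG \<theta> \<sigma> \<kappa>"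
    and "d \<equiv> dNIG q \<theta> \<sigma> \<kappa> \<mu>"
    and "\<zeta> \<equiv> zetaNIG q \<theta> \<sigma> \<kappa> \<mu>"
    and "\<zeta>h \<equiv> zetahatNIG q \<theta> \<sigma> \<kappa> \<mu>"
  shows
    \<comment> \<open>(i)\<close>
    "(finite {z. \<psi> z = of_real q} \<and> card {z. \<psi> z = of_real q} \<le> 2)
    \<comment> \<open>(ii)\<close>
     \<and> (\<forall>z0. \<psi> z0 = of_real q \<longleftrightarrow>
        (\<exists>x. z0 = complex_of_real x \<and> x \<in> {\<rho>h..<0} \<union> {0<..\<rho>}
             \<and> (z0 = \<zeta> \<or> z0 = \<zeta>h) \<and> d > 0 \<and> q - 1 / \<kappa> \<le> \<mu> * x))
     \<and> ((\<psi> \<zeta> = of_real q \<or> \<psi> \<zeta>h = of_real q) \<longrightarrow> \<zeta> \<noteq> \<zeta>h)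
    \<comment> \<open>(iii)\<close>
     \<and> (\<psi> \<zeta> = of_real q \<longrightarrow> \<zeta> \<in> \<real> \<and> Re \<zeta> > 0)
     \<and> (\<psi> \<zeta>h = of_real q \<longrightarrow> \<zeta>h \<in> \<real> \<and> Re \<zeta>h < 0)
     \<and> (\<psi> \<zeta> = of_real q \<and> \<psi> \<zeta>h = of_real q \<longrightarrow>
        \<zeta> \<in> \<real> \<and> \<zeta>h \<in> \<real> \<and> \<rho>h \<le> Re \<zeta>h \<and> Re \<zeta>h < 0 \<and> 0 < Re \<zeta> \<and> Re \<zeta> \<le> \<rho>)
    \<comment> \<open>(iv)\<close>
     \<and> (\<forall>z0. \<psi> z0 = of_real q \<and> z0 \<in> \<real> \<and> \<rho>h < Re z0 \<and> Re z0 < \<rho> \<longrightarrow>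
        (\<lambda>z. of_real q - \<psi> z) analytic_on {z0} \<and> deriv (\<lambda>z. of_real q - \<psi> z) z0 \<noteq> 0)
    \<comment> \<open>(v)\<close>
     \<and> (\<zeta> \<in> \<real> \<longrightarrow> \<rho>h \<le> Re \<zeta> \<and> Re \<zeta> \<le> \<rho>)
     \<and> (\<zeta>h \<in> \<real> \<longrightarrow> \<rho>h \<le> Re \<zeta>h \<and> Re \<zeta>h \<le> \<rho>)
    \<comment> \<open>(vi)\<close>
     \<and> (complex_of_real \<rho> \<noteq> \<zeta>h \<and> complex_of_real \<rho>h \<noteq> \<zeta>)
    \<comment> \<open>(vii)\<close>
     \<and> ((\<zeta> = complex_of_real \<rho> \<and> \<zeta>h = complex_of_real \<rho>h) \<longleftrightarrow> (\<mu> = 0 \<and> q = 1 / \<kappa>))"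
proof -
  note q = assms(1) and k = assms(2) and s = assms(3)
  define D where "D = \<sigma>\<^sup>2 + \<kappa> * \<mu>\<^sup>2"
  define B where "B = - \<theta> - \<mu> + \<kappa> * \<mu> * q"
  define W where "W = (\<lambda>z. of_real (1 - q*\<kappa>) + of_real (\<kappa>*\<mu>) * (z::complex))"
  define P where "P = (\<lambda>z. 1 - 2 * of_real \<kappa> * of_real \<theta> * z - of_real \<kappa> * (of_real \<sigma>)\<^sup>2 * (z::complex)\<^sup>2)"
  define pr where "pr = (\<lambda>x::real. 1 - 2*\<kappa>*\<theta>*x - \<kappa> * \<sigma>\<^sup>2 * x\<^sup>2)"
  have D0: "D > 0" unfolding D_def using s k by (simp add: add_pos_nonneg)
  have S1: "\<psi> z = of_real q \<longleftrightarrow> (W z)\<^sup>2 = P z \<and> (0 < Re (W z) \<or> Re (W z) = 0 \<and> 0 \<le> Im (W z))" for z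
    unfolding \<psi>_def psi_iff[OF k] csqrt_iff W_def P_def by simp
  have WR: "W (of_real x) = of_real (1 - q*\<kappa> + \<kappa>*\<mu>*x)" for x unfolding W_def by simp
  have PR: "P (of_real x) = of_real (pr x)" for x unfolding P_def pr_def by simp
  have KR: "D * ((1 - q*\<kappa> + \<kappa>*\<mu>*x)\<^sup>2 - pr x) = \<kappa> * ((D*x - B)\<^sup>2 - d)" for x
    unfolding D_def B_def pr_def d_def dNIG_def by (rule key_id)
  have KC: "of_real D * ((W z)\<^sup>2 - P z) = of_real \<kappa> * ((of_real D * z - of_real B)\<^sup>2 - of_real d)" for z
    using key_id[of "of_real \<sigma>" "of_real \<kappa>" "of_real \<mu>" "of_real q" z "of_real \<theta>"]
    unfolding D_def B_def W_def P_def d_def dNIG_def by simp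

  have Dc: "(of_real D :: complex) \<noteq> 0" using D0 by simp
  have kc: "(of_real \<kappa> :: complex) \<noteq> 0" using k by simp
  have DD: "complex_of_real (\<kappa> * \<mu>\<^sup>2 + \<sigma>\<^sup>2) = of_real D" unfolding D_def by (simp add: add.commute)
  have S4: "of_real D * \<zeta> - of_real B = csqrt (of_real d)"
    unfolding \<zeta>_def zetaNIG_def d_def[symmetric] B_def[symmetric] DD using Dc by (simp add: field_simps)
  have S4h: "of_real D * \<zeta>h - of_real B = - csqrt (of_real d)"
    unfolding \<zeta>h_def zetahatNIG_def d_def[symmetric] B_def[symmetric] DD using Dc by (simp add: field_simps)
  have S5: "(W z)\<^sup>2 = P z \<longleftrightarrow> z = \<zeta> \<or> z = \<zeta>h" for z
  proof -
    have "(W z)\<^sup>2 = P z \<longleftrightarrow> (of_real D * z - of_real B)\<^sup>2 = of_real d"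
    proof
      assume "(W z)\<^sup>2 = P z" thus "(of_real D * z - of_real B)\<^sup>2 = of_real d" using KC[of z] kc by simp
    next
      assume "(of_real D * z - of_real B)\<^sup>2 = of_real d" thus "(W z)\<^sup>2 = P z" using KC[of z] Dc by simp
    qed
    also have "\<dots> \<longleftrightarrow> (of_real D * z - of_real B)\<^sup>2 = (csqrt (of_real d))\<^sup>2" by simp
    also have "\<dots> \<longleftrightarrow> of_real D * z - of_real B = csqrt (of_real d) \<or> of_real D * z - of_real B = - csqrt (of_real d)"
      by (rule power2_eq_iff)
    also have "\<dots> \<longleftrightarrow> z = \<zeta> \<or> z = \<zeta>h"
    proof -
      have "of_real D * z - of_real B = csqrt (of_real d) \<longleftrightarrow> z = \<zeta>" using Dc by (simp only: S4[symmetric]) simp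
      moreover have "of_real D * z - of_real B = - csqrt (of_real d) \<longleftrightarrow> z = \<zeta>h" using Dc by (simp only: S4h[symmetric]) simp
      ultimately show ?thesis by blast
    qed
    finally show ?thesis .
  qed
  have Im0: "Im z = 0" if "\<psi> z = of_real q" for z
  proof (rule ccontr)
    assume "Im z \<noteq> 0"
    from that have "(W z)\<^sup>2 = P z" "0 \<le> Re (W z)" unfolding S1 by auto
    with cplx_case[OF q k s _ \<open>Im z \<noteq> 0\<close>, of \<mu> \<theta>] show False unfolding W_def P_def by force
  qed
  have RS: "\<psi> (of_real x) = of_real q \<longleftrightarrow> (1-q*\<kappa>+\<kappa>*\<mu>*x)\<^sup>2 = pr x \<and> 0 \<le> 1-q*\<kappa>+\<kappa>*\<mu>*x" for x
    unfolding S1 WR PR of_real_power[symmetric] of_real_eq_iff Re_complex_of_real Im_complex_of_real by auto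
  have rf: "\<rho>h < 0" "0 < \<rho>" "\<And>x. pr x = - \<kappa> * \<sigma>\<^sup>2 * (x - \<rho>) * (x - \<rho>h)"
    using rho_facts[OF k s, of \<theta>] unfolding pr_def \<rho>_def \<rho>h_def by auto
  have range1: "\<rho>h \<le> x \<and> x \<le> \<rho>" if "pr x \<ge> 0" for x
  proof -
    have "\<kappa> * \<sigma>\<^sup>2 > 0" using k s by simp
    hence "(x - \<rho>) * (x - \<rho>h) \<le> 0" using that rf(3)[of x]
      by (smt (verit, best) mult_minus_left mult.assoc mult_pos_pos)
    thus ?thesis using rf(1,2) by (auto simp: mult_le_0_iff)
  qed
  have range2: "pr x > 0" if "\<rho>h < x" "x < \<rho>" for x
  proof -
    have "\<kappa> * \<sigma>\<^sup>2 > 0" using k s by simp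
    moreover have "(x - \<rho>) * (x - \<rho>h) < 0" using that by (simp add: mult_neg_pos)
    ultimately have "(\<kappa> * \<sigma>\<^sup>2) * ((x - \<rho>) * (x - \<rho>h)) < 0" by (rule mult_pos_neg)
    thus ?thesis using rf(3)[of x] by (simp add: mult.assoc)
  qed
  have SR: "\<kappa>*x*(D*x-B) = (1-q*\<kappa>+\<kappa>*\<mu>*x-1)\<^sup>2/2 + q*\<kappa>*(1-q*\<kappa>+\<kappa>*\<mu>*x) + \<kappa> * \<sigma>\<^sup>2 * x\<^sup>2/2 \<and> (D*x-B)\<^sup>2 = d"
    if "(1-q*\<kappa>+\<kappa>*\<mu>*x)\<^sup>2 = pr x" for x
  proof
    show "\<kappa>*x*(D*x-B) = (1-q*\<kappa>+\<kappa>*\<mu>*x-1)\<^sup>2/2 + q*\<kappa>*(1-q*\<kappa>+\<kappa>*\<mu>*x) + \<kappa> * \<sigma>\<^sup>2 * x\<^sup>2/2"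
      unfolding D_def B_def by (rule real_id) (use that in \<open>auto simp: pr_def\<close>)
    show "(D*x-B)\<^sup>2 = d" using KR[of x] that k by simp
  qed
  have ZR: "(1-q*\<kappa>+\<kappa>*\<mu>*x)\<^sup>2 = pr x \<and> d \<ge> 0 \<and> D*x - B = sqrt d" if "of_real x = \<zeta>" for x
  proof -
    have 1: "(1-q*\<kappa>+\<kappa>*\<mu>*x)\<^sup>2 = pr x" using S5[of "of_real x"] that unfolding WR PR
      by (metis of_real_eq_iff of_real_power)
    hence 2: "d \<ge> 0" using SR[OF 1] by (metis zero_le_power2)
    have "complex_of_real (D*x - B) = of_real (sqrt d)" using S4 that csqrt_of_real[OF 2] by simp
    thus ?thesis using 1 2 of_real_eq_iff by blast
  qed
  have ZhR: "(1-q*\<kappa>+\<kappa>*\<mu>*x)\<^sup>2 = pr x \<and> d \<ge> 0 \<and> D*x - B = - sqrt d" if "of_real x = \<zeta>h" for x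
  proof -
    have 1: "(1-q*\<kappa>+\<kappa>*\<mu>*x)\<^sup>2 = pr x" using S5[of "of_real x"] that unfolding WR PR
      by (metis of_real_eq_iff of_real_power)
    hence 2: "d \<ge> 0" using SR[OF 1] by (metis zero_le_power2)
    have "complex_of_real (D*x - B) = of_real (- sqrt d)" using S4h that csqrt_of_real[OF 2] by simp
    thus ?thesis using 1 2 of_real_eq_iff by blast
  qed

  have SOL: "\<exists>x. z = of_real x \<and> x \<noteq> 0 \<and> \<rho>h \<le> x \<and> x \<le> \<rho> \<and> 0 \<le> 1-q*\<kappa>+\<kappa>*\<mu>*x
      \<and> (1-q*\<kappa>+\<kappa>*\<mu>*x)\<^sup>2 = pr x \<and> \<kappa>*x*(D*x-B) > 0 \<and> d > 0 \<and> (z = \<zeta> \<or> z = \<zeta>h)"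
    if sol: "\<psi> z = of_real q" for z
  proof -
    define x where "x = Re z"
    have zx: "z = of_real x" unfolding x_def using Im0[OF sol] by (simp add: complex_eq_iff)
    have r: "(1-q*\<kappa>+\<kappa>*\<mu>*x)\<^sup>2 = pr x" "0 \<le> 1-q*\<kappa>+\<kappa>*\<mu>*x" using sol RS[of x] zx by auto
    have x0: "x \<noteq> 0"
    proof
      assume "x = 0"
      hence "(1-q*\<kappa>)\<^sup>2 = 1" "0 \<le> 1-q*\<kappa>" using r by (auto simp: pr_def)
      hence "1 - q*\<kappa> = 1" by (metis abs_of_nonneg power2_eq_1_iff abs_minus_cancel abs_one abs_of_nonneg)
      thus False using q k by simp
    qed
    have rg: "\<rho>h \<le> x \<and> x \<le> \<rho>" using range1[of x] r(1) by (metis zero_le_power2)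
    have sr: "\<kappa>*x*(D*x-B) = (1-q*\<kappa>+\<kappa>*\<mu>*x-1)\<^sup>2/2 + q*\<kappa>*(1-q*\<kappa>+\<kappa>*\<mu>*x) + \<kappa> * \<sigma>\<^sup>2 * x\<^sup>2/2"
      "(D*x-B)\<^sup>2 = d" using SR[OF r(1)] by auto
    have "\<kappa> * \<sigma>\<^sup>2 * x\<^sup>2 > 0" using k s x0 by simp
    moreover have "q*\<kappa>*(1-q*\<kappa>+\<kappa>*\<mu>*x) \<ge> 0" using q k r(2) by simp
    moreover have "(1-q*\<kappa>+\<kappa>*\<mu>*x-1)\<^sup>2 \<ge> 0" by simp
    ultimately have pos: "\<kappa>*x*(D*x-B) > 0" unfolding sr(1) by linarith
    hence "D*x-B \<noteq> 0" by auto
    hence "d > 0" using sr(2) by auto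
    moreover have "z = \<zeta> \<or> z = \<zeta>h" using sol S5 S1 by blast
    ultimately show ?thesis using zx x0 rg r pos by blast
  qed
  have C1: "{z. \<psi> z = of_real q} \<subseteq> {\<zeta>, \<zeta>h}" using SOL by blast
  have Ci: "finite {z. \<psi> z = of_real q} \<and> card {z. \<psi> z = of_real q} \<le> 2"
  proof
    show "finite {z. \<psi> z = of_real q}" using C1 finite_subset by blast
    have "card {z. \<psi> z = of_real q} \<le> card {\<zeta>, \<zeta>h}" using C1 by (intro card_mono) auto
    also have "\<dots> \<le> 2" by (simp add: card_insert_if)
    finally show "card {z. \<psi> z = of_real q} \<le> 2" .
  qed
  have Cii: "\<psi> z0 = of_real q \<longleftrightarrow>
        (\<exists>x. z0 = complex_of_real x \<and> x \<in> {\<rho>h..<0} \<union> {0<..\<rho>}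
             \<and> (z0 = \<zeta> \<or> z0 = \<zeta>h) \<and> d > 0 \<and> q - 1 / \<kappa> \<le> \<mu> * x)" for z0
  proof
    assume "\<psi> z0 = of_real q"
    then obtain x where x: "z0 = of_real x" "x \<noteq> 0" "\<rho>h \<le> x" "x \<le> \<rho>" "0 \<le> 1-q*\<kappa>+\<kappa>*\<mu>*x"
      "d > 0" "z0 = \<zeta> \<or> z0 = \<zeta>h" using SOL by blast
    have "q - 1/\<kappa> \<le> \<mu> * x"
    proof -
      have "\<kappa> * (q - 1/\<kappa>) \<le> \<kappa> * (\<mu> * x)" using x(5) k by (simp add: algebra_simps)
      thus ?thesis using k by simp
    qed
    thus "\<exists>x. z0 = complex_of_real x \<and> x \<in> {\<rho>h..<0} \<union> {0<..\<rho>}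
             \<and> (z0 = \<zeta> \<or> z0 = \<zeta>h) \<and> d > 0 \<and> q - 1 / \<kappa> \<le> \<mu> * x"
      using x by (intro exI[of _ x]) auto
  next
    assume "\<exists>x. z0 = complex_of_real x \<and> x \<in> {\<rho>h..<0} \<union> {0<..\<rho>}
             \<and> (z0 = \<zeta> \<or> z0 = \<zeta>h) \<and> d > 0 \<and> q - 1 / \<kappa> \<le> \<mu> * x"
    then obtain x where x: "z0 = of_real x" "z0 = \<zeta> \<or> z0 = \<zeta>h" "q - 1 / \<kappa> \<le> \<mu> * x" by blast
    have "\<kappa> * (q - 1/\<kappa>) \<le> \<kappa> * (\<mu> * x)" using x(3) k by (intro mult_left_mono) auto
    hence "0 \<le> 1-q*\<kappa>+\<kappa>*\<mu>*x" using k by (simp add: algebra_simps)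
    moreover have "(1-q*\<kappa>+\<kappa>*\<mu>*x)\<^sup>2 = pr x" using x(1,2) ZR ZhR by metis
    ultimately show "\<psi> z0 = of_real q" using RS x(1) by simp
  qed
  have Cneq: "(\<psi> \<zeta> = of_real q \<or> \<psi> \<zeta>h = of_real q) \<longrightarrow> \<zeta> \<noteq> \<zeta>h"
  proof
    assume "\<psi> \<zeta> = of_real q \<or> \<psi> \<zeta>h = of_real q"
    hence "d > 0" using SOL by blast
    show "\<zeta> \<noteq> \<zeta>h"
    proof
      assume "\<zeta> = \<zeta>h"
      hence "csqrt (of_real d) = - csqrt (of_real d)" using S4 S4h by simp
      hence "csqrt (of_real d) = 0" by simp
      thus False using \<open>d > 0\<close> by simp
    qed
  qed
  have Ciii1: "\<psi> \<zeta> = of_real q \<longrightarrow> \<zeta> \<in> \<real> \<and> Re \<zeta> > 0"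
  proof
    assume "\<psi> \<zeta> = of_real q"
    then obtain x where x: "\<zeta> = of_real x" "\<kappa>*x*(D*x-B) > 0" "d > 0" using SOL by blast
    have "D*x - B = sqrt d" using ZR x(1) by metis
    hence "D*x - B > 0" using x(3) by simp
    hence "x > 0" using x(2) k by (simp add: zero_less_mult_iff)
    thus "\<zeta> \<in> \<real> \<and> Re \<zeta> > 0" using x(1) by simp
  qed
  have Ciii2: "\<psi> \<zeta>h = of_real q \<longrightarrow> \<zeta>h \<in> \<real> \<and> Re \<zeta>h < 0"
  proof
    assume "\<psi> \<zeta>h = of_real q"
    then obtain x where x: "\<zeta>h = of_real x" "\<kappa>*x*(D*x-B) > 0" "d > 0" using SOL by blast
    have "D*x - B = - sqrt d" using ZhR x(1) by metis
    hence "D*x - B < 0" using x(3) by simp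
    hence "x < 0" using x(2) k by (simp add: zero_less_mult_iff mult_less_0_iff)
    thus "\<zeta>h \<in> \<real> \<and> Re \<zeta>h < 0" using x(1) by simp
  qed
  have Ciii3: "\<psi> \<zeta> = of_real q \<and> \<psi> \<zeta>h = of_real q \<longrightarrow>
        \<zeta> \<in> \<real> \<and> \<zeta>h \<in> \<real> \<and> \<rho>h \<le> Re \<zeta>h \<and> Re \<zeta>h < 0 \<and> 0 < Re \<zeta> \<and> Re \<zeta> \<le> \<rho>"
  proof
    assume a: "\<psi> \<zeta> = of_real q \<and> \<psi> \<zeta>h = of_real q"
    obtain x where x: "\<zeta> = of_real x" "x \<le> \<rho>" using SOL a by blast
    obtain y where y: "\<zeta>h = of_real y" "\<rho>h \<le> y" using SOL a by blast
    show "\<zeta> \<in> \<real> \<and> \<zeta>h \<in> \<real> \<and> \<rho>h \<le> Re \<zeta>h \<and> Re \<zeta>h < 0 \<and> 0 < Re \<zeta> \<and> Re \<zeta> \<le> \<rho>"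
      using x y a Ciii1 Ciii2 by simp
  qed
  have Cv1: "\<zeta> \<in> \<real> \<longrightarrow> \<rho>h \<le> Re \<zeta> \<and> Re \<zeta> \<le> \<rho>"
  proof
    assume "\<zeta> \<in> \<real>"
    hence "of_real (Re \<zeta>) = \<zeta>" by (simp add: complex_is_Real_iff complex_eq_iff)
    hence "(1-q*\<kappa>+\<kappa>*\<mu>*Re \<zeta>)\<^sup>2 = pr (Re \<zeta>)" using ZR by blast
    thus "\<rho>h \<le> Re \<zeta> \<and> Re \<zeta> \<le> \<rho>" using range1 by (metis zero_le_power2)
  qed
  have Cv2: "\<zeta>h \<in> \<real> \<longrightarrow> \<rho>h \<le> Re \<zeta>h \<and> Re \<zeta>h \<le> \<rho>"
  proof
    assume "\<zeta>h \<in> \<real>"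
    hence "of_real (Re \<zeta>h) = \<zeta>h" by (simp add: complex_is_Real_iff complex_eq_iff)
    hence "(1-q*\<kappa>+\<kappa>*\<mu>*Re \<zeta>h)\<^sup>2 = pr (Re \<zeta>h)" using ZhR by blast
    thus "\<rho>h \<le> Re \<zeta>h \<and> Re \<zeta>h \<le> \<rho>" using range1 by (metis zero_le_power2)
  qed
  have prr: "pr \<rho> = 0" "pr \<rho>h = 0" using rf(3) by auto
  have u0: "1-q*\<kappa>+\<kappa>*\<mu>*x = 0" if "(1-q*\<kappa>+\<kappa>*\<mu>*x)\<^sup>2 = pr x" "pr x = 0" for x
    using that by simp
  have Cvi: "complex_of_real \<rho> \<noteq> \<zeta>h \<and> complex_of_real \<rho>h \<noteq> \<zeta>"
  proof
    show "complex_of_real \<rho> \<noteq> \<zeta>h"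
    proof
      assume a: "complex_of_real \<rho> = \<zeta>h"
      have h: "(1-q*\<kappa>+\<kappa>*\<mu>*\<rho>)\<^sup>2 = pr \<rho>" "d \<ge> 0" "D*\<rho> - B = - sqrt d" using ZhR[OF a] by auto
      have "\<kappa>*\<rho>*(D*\<rho>-B) = (1-q*\<kappa>+\<kappa>*\<mu>*\<rho>-1)\<^sup>2/2 + q*\<kappa>*(1-q*\<kappa>+\<kappa>*\<mu>*\<rho>) + \<kappa> * \<sigma>\<^sup>2 * \<rho>\<^sup>2/2"
        using SR[OF h(1)] by blast
      also have "\<dots> = 1/2 + \<kappa> * \<sigma>\<^sup>2 * \<rho>\<^sup>2/2" using u0[OF h(1) prr(1)] by simp
      also have "\<dots> > 0" using k by (simp add: add_pos_nonneg)
      finally have "\<kappa>*\<rho>*(D*\<rho>-B) > 0" .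
      moreover have "D*\<rho>-B \<le> 0" using h(3) h(2) by simp
      moreover have "\<kappa>*\<rho> > 0" using k rf(2) by simp
      ultimately show False by (smt (verit) mult_nonneg_nonpos)
    qed
    show "complex_of_real \<rho>h \<noteq> \<zeta>"
    proof
      assume a: "complex_of_real \<rho>h = \<zeta>"
      have h: "(1-q*\<kappa>+\<kappa>*\<mu>*\<rho>h)\<^sup>2 = pr \<rho>h" "d \<ge> 0" "D*\<rho>h - B = sqrt d" using ZR[OF a] by auto
      have "\<kappa>*\<rho>h*(D*\<rho>h-B) = (1-q*\<kappa>+\<kappa>*\<mu>*\<rho>h-1)\<^sup>2/2 + q*\<kappa>*(1-q*\<kappa>+\<kappa>*\<mu>*\<rho>h) + \<kappa> * \<sigma>\<^sup>2 * \<rho>h\<^sup>2/2"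
        using SR[OF h(1)] by blast
      also have "\<dots> = 1/2 + \<kappa> * \<sigma>\<^sup>2 * \<rho>h\<^sup>2/2" using u0[OF h(1) prr(2)] by simp
      also have "\<dots> > 0" using k by (simp add: add_pos_nonneg)
      finally have "\<kappa>*\<rho>h*(D*\<rho>h-B) > 0" .
      moreover have "D*\<rho>h-B \<ge> 0" using h(3) h(2) by simp
      moreover have "\<kappa>*\<rho>h < 0" using k rf(1) by (simp add: mult_pos_neg)
      ultimately show False by (smt (verit) mult_nonpos_nonneg)
    qed
  qed
  have Cvii: "(\<zeta> = complex_of_real \<rho> \<and> \<zeta>h = complex_of_real \<rho>h) \<longleftrightarrow> (\<mu> = 0 \<and> q = 1 / \<kappa>)"
  proof
    assume a: "\<zeta> = complex_of_real \<rho> \<and> \<zeta>h = complex_of_real \<rho>h"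
    have e1: "1-q*\<kappa>+\<kappa>*\<mu>*\<rho> = 0" using ZR[of \<rho>] a u0 prr by metis
    have e2: "1-q*\<kappa>+\<kappa>*\<mu>*\<rho>h = 0" using ZhR[of \<rho>h] a u0 prr by metis
    have "\<kappa>*\<mu>*(\<rho> - \<rho>h) = (1-q*\<kappa>+\<kappa>*\<mu>*\<rho>) - (1-q*\<kappa>+\<kappa>*\<mu>*\<rho>h)" by (simp add: algebra_simps)
    hence "\<kappa>*\<mu>*(\<rho> - \<rho>h) = 0" using e1 e2 by simp
    hence "\<mu> = 0" using k rf(1,2) by simp
    thus "\<mu> = 0 \<and> q = 1 / \<kappa>" using e1 k by (simp add: field_simps)
  next
    assume a: "\<mu> = 0 \<and> q = 1 / \<kappa>"
    have dd: "d = \<theta>\<^sup>2 + \<sigma>\<^sup>2 / \<kappa>" unfolding d_def dNIG_def using a k by (simp add: field_simps)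
    have dn: "\<theta>\<^sup>2 + \<sigma>\<^sup>2 / \<kappa> \<ge> 0" using k by (simp add: add_nonneg_nonneg)
    have "\<zeta> = (of_real (- \<theta>) + of_real (sqrt (\<theta>\<^sup>2 + \<sigma>\<^sup>2 / \<kappa>))) / of_real (\<sigma>\<^sup>2)"
      unfolding \<zeta>_def zetaNIG_def d_def[symmetric] dd csqrt_of_real[OF dn] using a by simp
    moreover have "\<zeta>h = (of_real (- \<theta>) - of_real (sqrt (\<theta>\<^sup>2 + \<sigma>\<^sup>2 / \<kappa>))) / of_real (\<sigma>\<^sup>2)"
      unfolding \<zeta>h_def zetahatNIG_def d_def[symmetric] dd csqrt_of_real[OF dn] using a by simp
    ultimately show "\<zeta> = complex_of_real \<rho> \<and> \<zeta>h = complex_of_real \<rho>h"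
      unfolding \<rho>_def \<rho>h_def rhoNIG_def rhohatNIG_def by simp
  qed
  have Civ: "\<forall>z0. \<psi> z0 = of_real q \<and> z0 \<in> \<real> \<and> \<rho>h < Re z0 \<and> Re z0 < \<rho> \<longrightarrow>
        (\<lambda>z. of_real q - \<psi> z) analytic_on {z0} \<and> deriv (\<lambda>z. of_real q - \<psi> z) z0 \<noteq> 0"
  proof (intro allI impI)
    fix z0 assume a: "\<psi> z0 = of_real q \<and> z0 \<in> \<real> \<and> \<rho>h < Re z0 \<and> Re z0 < \<rho>"
    define x where "x = Re z0"
    define u where "u = 1-q*\<kappa>+\<kappa>*\<mu>*x"
    have zx: "z0 = of_real x" unfolding x_def using a by (simp add: complex_is_Real_iff complex_eq_iff)
    obtain x' where x': "z0 = of_real x'" "0 \<le> 1-q*\<kappa>+\<kappa>*\<mu>*x'" "(1-q*\<kappa>+\<kappa>*\<mu>*x')\<^sup>2 = pr x'" "\<kappa>*x'*(D*x'-B) > 0"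
      using SOL a by blast
    have "x' = x" using x' zx by simp
    hence u: "0 \<le> u" "u\<^sup>2 = pr x" "\<kappa>*x*(D*x-B) > 0" using x' unfolding u_def by auto
    have prp: "pr x > 0" using range2 a unfolding x_def by blast
    hence up: "u > 0" using u by (metis less_eq_real_def power2_eq_square mult_zero_left)
    have sq: "csqrt (P z0) = of_real u"
      unfolding zx PR by (metis csqrt_of_real less_imp_le prp real_sqrt_unique u(1) u(2))
    have Pn: "P z0 \<notin> \<real>\<^sub>\<le>\<^sub>0" unfolding zx PR using prp by (simp add: complex_nonpos_Reals_iff)
    have fe: "(\<lambda>z. of_real q - \<psi> z) = (\<lambda>z. of_real q - (1 / of_real \<kappa> - 1 / of_real \<kappa> * csqrt (P z) + of_real \<mu> * z))"
      unfolding \<psi>_def psiX_def P_def by simp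
    show "(\<lambda>z. of_real q - \<psi> z) analytic_on {z0} \<and> deriv (\<lambda>z. of_real q - \<psi> z) z0 \<noteq> 0"
    proof
      show "(\<lambda>z. of_real q - \<psi> z) analytic_on {z0}" unfolding fe P_def
        using Pn k unfolding P_def by (auto intro!: analytic_intros)
      define P' where "P' = - 2 * of_real \<kappa> * of_real \<theta> - of_real \<kappa> * (of_real \<sigma>)\<^sup>2 * (2 * z0)"
      have dP: "(P has_field_derivative P') (at z0)" unfolding P_def P'_def
        by (auto intro!: derivative_eq_intros simp: algebra_simps power2_eq_square)
      have dS: "((\<lambda>z. csqrt (P z)) has_field_derivative (P' / (2 * csqrt (P z0)))) (at z0)"
        by (rule has_field_derivative_csqrt'[OF dP Pn])
      have dF: "((\<lambda>z. of_real q - (1 / of_real \<kappa> - 1 / of_real \<kappa> * csqrt (P z) + of_real \<mu> * z))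
          has_field_derivative (0 - (0 - 1 / of_real \<kappa> * (P' / (2 * csqrt (P z0))) + of_real \<mu> * 1))) (at z0)"
        by (intro DERIV_diff DERIV_add DERIV_cmult DERIV_const DERIV_ident dS)
      have "deriv (\<lambda>z. of_real q - \<psi> z) z0 = 0 - (0 - 1 / of_real \<kappa> * (P' / (2 * csqrt (P z0))) + of_real \<mu> * 1)"
        unfolding fe by (rule DERIV_imp_deriv[OF dF])
      also have "\<dots> = of_real (- (D*x - B) / u)"
      proof -
        have e: "D*x - B = \<theta> + \<sigma>\<^sup>2 * x + \<mu> * u" unfolding D_def B_def u_def by (simp add: algebra_simps power2_eq_square)
        show ?thesis unfolding P'_def e zx sq[unfolded zx] using up k by (simp add: field_simps power2_eq_square)
      qed
      also have "\<dots> \<noteq> 0"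
      proof -
        have "D*x-B \<noteq> 0" using u(3) by auto
        hence "-(D*x-B)/u \<noteq> 0" using up by simp
        thus ?thesis by (simp only: of_real_eq_0_iff not_False_eq_True)
      qed
      finally show "deriv (\<lambda>z. of_real q - \<psi> z) z0 \<noteq> 0" .
    qed
  qed
  show ?thesis using Ci Cii Cneq Ciii1 Ciii2 Ciii3 Civ Cv1 Cv2 Cvi Cvii by blast

qed
end
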